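(* Let $E$ be a pseudo effect algebra satisfying $\sigma$-(RDP). If $m$ is a $\sigma$-additive Jordan signed measure on $E$, then $m^+$, $m^-$ and $|m|$ are $\sigma$-additive.
   Context: Pseudo effect algebra: partial algebra $(E;+,0,1)$ such that for all $a,b,c$: (i) $a+b$ and $(a+b)+c$ exist iff $b+c$ and $a+(b+c)$ exist, and then they are equal; (ii) there is exactly one $d$ and one $e$ with $a+d=e+a=1$; (iii) if $a+b$ exists there are $d,e$ with $a+b=d+a=b+e$; (iv) if $1+a$ or $a+1$ exists then $a=0$. Order: $a\le b$ iff $a+c=b$ for some $c$. For a sequence $\{a_n\}$ such that $b_n=a_1+\cdots+a_n$ exists for all $n$, if $a=\bigvee_n b_n$ exists in $E$ we write $a=\sum_n a_n$. $E$ satisfies $\sigma$-(RDP) if whenever $a_1+a_2=\sum_n b_n$, there are sequences $\{c_{1n}\}_n,\{c_{2n}\}_n$ in $E$ with $a_i=\sum_n c_{in}$ ($i=1,2$) and $b_n=c_{1n}+c_{2n}$ for all $n$ (this implies (RDP)). Signed measure: $m:E\to\mathbb R$ additive on defined sums; measure: nonnegative one; $m$ is $\sigma$-additive if $a_1\le a_2\le\cdots$ with $a=\bigvee_na_n$ in $E$ implies $m(a)=\lim_n m(a_n)$. Jordan signed measure: difference of two measures; $\mathcal J(E)$ is their set ordered by $m_1\le^+m_2$ iff $m_2-m_1$ is a measure, a lattice-ordered group; $m^+:=m\vee0$, $m^-:=-(m\wedge0)$, $|m|:=m^++m^-$. *)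

theory Defs
  imports Complex_Main
begin

text \<open>A pseudo effect algebra is modelled on a whole type 'a, with the partial
  addition given as a function pl :: 'a => 'a => 'a option (None = undefined),
  a zero z and a unit u.\<close>

definition pea :: "('a \<Rightarrow> 'a \<Rightarrow> 'a option) \<Rightarrow> 'a \<Rightarrow> 'a \<Rightarrow> bool" where
  "pea pl z u \<longleftrightarrow>
     (\<forall>a b c. Option.bind (pl a b) (\<lambda>x. pl x c) = Option.bind (pl b c) (\<lambda>y. pl a y)) \<and>
     (\<forall>a. (\<exists>!d. pl a d = Some u) \<and> (\<exists>!e. pl e a = Some u)) \<and>
     (\<forall>a b s. pl a b = Some s \<longrightarrow> (\<exists>d e. pl d a = Some s \<and> pl b e = Some s)) \<and>
     (\<forall>a. (pl u a \<noteq> None \<or> pl a u \<noteq> None) \<longrightarrow> a = z)"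

definition pea_le :: "('a \<Rightarrow> 'a \<Rightarrow> 'a option) \<Rightarrow> 'a \<Rightarrow> 'a \<Rightarrow> bool" where
  "pea_le pl a b \<longleftrightarrow> (\<exists>c. pl a c = Some b)"

definition is_sup :: "('a \<Rightarrow> 'a \<Rightarrow> bool) \<Rightarrow> 'a set \<Rightarrow> 'a \<Rightarrow> bool" where
  "is_sup le S s \<longleftrightarrow> (\<forall>x\<in>S. le x s) \<and> (\<forall>v. (\<forall>x\<in>S. le x v) \<longrightarrow> le s v)"

fun psum :: "('a \<Rightarrow> 'a \<Rightarrow> 'a option) \<Rightarrow> (nat \<Rightarrow> 'a) \<Rightarrow> nat \<Rightarrow> 'a option" where
  "psum pl a 0 = Some (a 0)"
| "psum pl a (Suc n) = Option.bind (psum pl a n) (\<lambda>s. pl s (a (Suc n)))"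

definition sigma_sum :: "('a \<Rightarrow> 'a \<Rightarrow> 'a option) \<Rightarrow> (nat \<Rightarrow> 'a) \<Rightarrow> 'a \<Rightarrow> bool" where
  "sigma_sum pl a s \<longleftrightarrow> (\<forall>n. psum pl a n \<noteq> None) \<and>
     is_sup (pea_le pl) (range (\<lambda>n. the (psum pl a n))) s"

definition sigma_RDP :: "('a \<Rightarrow> 'a \<Rightarrow> 'a option) \<Rightarrow> bool" where
  "sigma_RDP pl \<longleftrightarrow> (\<forall>a1 a2 x b. pl a1 a2 = Some x \<and> sigma_sum pl b x \<longrightarrow>
     (\<exists>c1 c2. sigma_sum pl c1 a1 \<and> sigma_sum pl c2 a2 \<and>
              (\<forall>n. pl (c1 n) (c2 n) = Some (b n))))"

definition signed_measure :: "('a \<Rightarrow> 'a \<Rightarrow> 'a option) \<Rightarrow> ('a \<Rightarrow> real) \<Rightarrow> bool" where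
  "signed_measure pl m \<longleftrightarrow> (\<forall>a b c. pl a b = Some c \<longrightarrow> m c = m a + m b)"

definition is_measure :: "('a \<Rightarrow> 'a \<Rightarrow> 'a option) \<Rightarrow> ('a \<Rightarrow> real) \<Rightarrow> bool" where
  "is_measure pl m \<longleftrightarrow> signed_measure pl m \<and> (\<forall>a. 0 \<le> m a)"

definition sigma_additive :: "('a \<Rightarrow> 'a \<Rightarrow> 'a option) \<Rightarrow> ('a \<Rightarrow> real) \<Rightarrow> bool" where
  "sigma_additive pl m \<longleftrightarrow> (\<forall>a x. (\<forall>n. pea_le pl (a n) (a (Suc n))) \<and>
       is_sup (pea_le pl) (range a) x \<longrightarrow> (\<lambda>n. m (a n)) \<longlonglongrightarrow> m x)"

definition jordan :: "('a \<Rightarrow> 'a \<Rightarrow> 'a option) \<Rightarrow> ('a \<Rightarrow> real) set" where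
  "jordan pl = {m. \<exists>m1 m2. is_measure pl m1 \<and> is_measure pl m2 \<and> m = (\<lambda>a. m1 a - m2 a)}"

definition jle :: "('a \<Rightarrow> 'a \<Rightarrow> 'a option) \<Rightarrow> ('a \<Rightarrow> real) \<Rightarrow> ('a \<Rightarrow> real) \<Rightarrow> bool" where
  "jle pl m1 m2 \<longleftrightarrow> is_measure pl (\<lambda>a. m2 a - m1 a)"

definition jsup :: "('a \<Rightarrow> 'a \<Rightarrow> 'a option) \<Rightarrow> ('a \<Rightarrow> real) \<Rightarrow> ('a \<Rightarrow> real) \<Rightarrow> ('a \<Rightarrow> real)" where
  "jsup pl m1 m2 = (THE p. p \<in> jordan pl \<and> jle pl m1 p \<and> jle pl m2 p \<and>
      (\<forall>q\<in>jordan pl. jle pl m1 q \<and> jle pl m2 q \<longrightarrow> jle pl p q))"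

definition jinf :: "('a \<Rightarrow> 'a \<Rightarrow> 'a option) \<Rightarrow> ('a \<Rightarrow> real) \<Rightarrow> ('a \<Rightarrow> real) \<Rightarrow> ('a \<Rightarrow> real)" where
  "jinf pl m1 m2 = (THE p. p \<in> jordan pl \<and> jle pl p m1 \<and> jle pl p m2 \<and>
      (\<forall>q\<in>jordan pl. jle pl q m1 \<and> jle pl q m2 \<longrightarrow> jle pl q p))"

definition jpos :: "('a \<Rightarrow> 'a \<Rightarrow> 'a option) \<Rightarrow> ('a \<Rightarrow> real) \<Rightarrow> ('a \<Rightarrow> real)" where
  "jpos pl m = jsup pl m (\<lambda>_. 0)"

definition jneg :: "('a \<Rightarrow> 'a \<Rightarrow> 'a option) \<Rightarrow> ('a \<Rightarrow> real) \<Rightarrow> ('a \<Rightarrow> real)" where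
  "jneg pl m = (\<lambda>a. - jinf pl m (\<lambda>_. 0) a)"

definition jabs :: "('a \<Rightarrow> 'a \<Rightarrow> 'a option) \<Rightarrow> ('a \<Rightarrow> real) \<Rightarrow> ('a \<Rightarrow> real)" where
  "jabs pl m = (\<lambda>a. jpos pl m a + jneg pl m a)"

end

theory Submission
  imports Defs
begin

locale peaR =
  fixes pl :: "'a \<Rightarrow> 'a \<Rightarrow> 'a option" and z u :: 'a
  assumes pea: "pea pl z u" and srdp: "sigma_RDP pl"
begin

lemma assoc: "Option.bind (pl a b) (\<lambda>x. pl x c) = Option.bind (pl b c) (\<lambda>y. pl a y)"
  using pea unfolding pea_def by blast

lemma assoc1: "pl a b = Some x \<Longrightarrow> pl x c = Some s \<Longrightarrow> \<exists>y. pl b c = Some y \<and> pl a y = Some s"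
  using assoc[of a b c] by (cases "pl b c") auto

lemma assoc2: "pl b c = Some y \<Longrightarrow> pl a y = Some s \<Longrightarrow> \<exists>x. pl a b = Some x \<and> pl x c = Some s"
  using assoc[of a b c] by (cases "pl a b") auto

lemma shift: "pl a b = Some s \<Longrightarrow> \<exists>e. pl b e = Some s"
  using pea unfolding pea_def by blast

lemma uz: "pl u z = Some u"
proof -
  obtain d where "pl u d = Some u" using pea unfolding pea_def by blast
  moreover then have "d = z" using pea unfolding pea_def by blast
  ultimately show ?thesis by simp
qed

lemma zu: "pl z u = Some u"
proof -
  obtain d where "pl d u = Some u" using pea unfolding pea_def by blast
  moreover then have "d = z" using pea unfolding pea_def by blast
  ultimately show ?thesis by simp
qed

lemma right_zero: "pl a z = Some a"
proof -
  obtain e where e: "pl e a = Some u" using pea unfolding pea_def by blast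
  from assoc1[OF e uz] obtain y where y: "pl a z = Some y" "pl e y = Some u" by blast
  have "\<exists>!d. pl e d = Some u" using pea unfolding pea_def by blast
  with e y have "y = a" by blast
  with y show ?thesis by simp
qed

lemma left_zero: "pl z a = Some a"
proof -
  obtain d where d: "pl a d = Some u" using pea unfolding pea_def by blast
  from assoc2[OF d zu] obtain x where x: "pl z a = Some x" "pl x d = Some u" by blast
  have "\<exists>!e. pl e d = Some u" using pea unfolding pea_def by blast
  with d x have "x = a" by blast
  with x show ?thesis by simp
qed

lemma le_refl: "pea_le pl a a"
  using right_zero unfolding pea_le_def by blast

lemma zero_le: "pea_le pl z a"
  using left_zero unfolding pea_le_def by blast

lemma sm_zero: assumes "signed_measure pl m" shows "m z = 0"
proof -
  have "m z = m z + m z" using assms left_zero[of z] unfolding signed_measure_def by blast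
  then show ?thesis by linarith
qed

lemma psum_sum: "signed_measure pl m \<Longrightarrow> psum pl s n = Some t \<Longrightarrow> m t = (\<Sum>k\<le>n. m (s k))"
proof (induction n arbitrary: t)
  case 0 then show ?case by simp
next
  case (Suc n)
  then obtain t' where t': "psum pl s n = Some t'" "pl t' (s (Suc n)) = Some t"
    by (cases "psum pl s n") auto
  then show ?case using Suc.IH[OF Suc.prems(1) t'(1)] Suc.prems(1)
    unfolding signed_measure_def by simp
qed

lemma meas_mono: assumes "is_measure pl m" "pea_le pl a b" shows "m a \<le> m b"
proof -
  obtain c where c: "pl a c = Some b" using assms(2) unfolding pea_le_def by blast
  have "m b = m a + m c" using assms(1) c unfolding is_measure_def signed_measure_def by blast
  moreover have "0 \<le> m c" using assms(1) unfolding is_measure_def by blast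
  ultimately show ?thesis by linarith
qed

lemma jordan_sm: assumes "m \<in> jordan pl" shows "signed_measure pl m"
proof -
  obtain m1 m2 where h: "is_measure pl m1" "is_measure pl m2" "m = (\<lambda>a. m1 a - m2 a)"
    using assms unfolding jordan_def by blast
  show ?thesis unfolding signed_measure_def
  proof (intro allI impI)
    fix a b c assume "pl a b = Some c"
    then have "m1 c = m1 a + m1 b" "m2 c = m2 a + m2 b" using h(1,2)
      unfolding is_measure_def signed_measure_def by blast+
    then show "m c = m a + m b" using h(3) by simp
  qed
qed

lemma jordan_neg: assumes "m \<in> jordan pl" shows "(\<lambda>a. - m a) \<in> jordan pl"
proof -
  obtain m1 m2 where h: "is_measure pl m1" "is_measure pl m2" "m = (\<lambda>a. m1 a - m2 a)"
    using assms unfolding jordan_def by blast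
  have "(\<lambda>a. - m a) = (\<lambda>a. m2 a - m1 a)" using h(3) by auto
  then show ?thesis using h(1,2) unfolding jordan_def by blast
qed

lemma rdp: assumes bc: "pl b c = Some s" and a12: "pl a1 a2 = Some s"
  shows "\<exists>b1 b2. pl b1 b2 = Some b \<and> pea_le pl b1 a1 \<and> pea_le pl b2 a2"
proof -
  define sq where "sq = (\<lambda>n::nat. if n = 0 then b else if n = 1 then c else z)"
  have p0: "psum pl sq 0 = Some b" by (simp add: sq_def)
  have p1: "psum pl sq (Suc 0) = Some s" by (simp add: sq_def bc)
  have pn: "psum pl sq (Suc n) = Some s" for n
  proof (induction n)
    case 0 then show ?case using p1 by simp
  next
    case (Suc n) then show ?case by (simp add: sq_def right_zero)
  qed
  have rng: "range (\<lambda>n. the (psum pl sq n)) = {b, s}"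
  proof -
    have "the (psum pl sq n) \<in> {b, s}" for n using p0 pn by (cases n) auto
    moreover have "b \<in> range (\<lambda>n. the (psum pl sq n))" using p0 by (metis option.sel rangeI)
    moreover have "s \<in> range (\<lambda>n. the (psum pl sq n))" using p1 by (metis option.sel rangeI)
    ultimately show ?thesis by blast
  qed
  have nn: "psum pl sq n \<noteq> None" for n using p0 pn by (cases n) auto
  have ss: "sigma_sum pl sq s"
    unfolding sigma_sum_def is_sup_def rng
  proof (intro conjI allI impI ballI)
    fix n show "psum pl sq n \<noteq> None" by (rule nn)
  next
    fix x assume "x \<in> {b, s}" then show "pea_le pl x s"
      using bc le_refl unfolding pea_le_def by auto
  next
    fix v assume "\<forall>x\<in>{b, s}. pea_le pl x v" then show "pea_le pl s v" by simp
  qed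
  from srdp a12 ss obtain c1 c2 where s1: "sigma_sum pl c1 a1" and s2: "sigma_sum pl c2 a2"
    and cc: "\<forall>n. pl (c1 n) (c2 n) = Some (sq n)" unfolding sigma_RDP_def by blast
  have "pea_le pl (c1 0) a1" using s1 unfolding sigma_sum_def is_sup_def
    by (metis option.sel psum.simps(1) rangeI)
  moreover have "pea_le pl (c2 0) a2" using s2 unfolding sigma_sum_def is_sup_def
    by (metis option.sel psum.simps(1) rangeI)
  moreover have "pl (c1 0) (c2 0) = Some b" using cc by (simp add: sq_def)
  ultimately show ?thesis by blast
qed


definition P :: "('a \<Rightarrow> real) \<Rightarrow> 'a \<Rightarrow> real" where
  "P m a = Sup {m b | b. pea_le pl b a}"

lemma jordan_bound: assumes "m \<in> jordan pl" shows "\<exists>K. \<forall>b. pea_le pl b a \<longrightarrow> m b \<le> K"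
proof -
  obtain m1 m2 where h: "is_measure pl m1" "is_measure pl m2" "m = (\<lambda>a. m1 a - m2 a)"
    using assms unfolding jordan_def by blast
  have "m b \<le> m1 a" if "pea_le pl b a" for b
  proof -
    have "m1 b \<le> m1 a" using meas_mono[OF h(1) that] .
    moreover have "0 \<le> m2 b" using h(2) unfolding is_measure_def by blast
    ultimately show ?thesis using h(3) by simp
  qed
  then show ?thesis by blast
qed

lemma P_upper: assumes "m \<in> jordan pl" "pea_le pl b a" shows "m b \<le> P m a"
proof -
  obtain K where K: "\<forall>b. pea_le pl b a \<longrightarrow> m b \<le> K" using jordan_bound[OF assms(1)] by blast
  have "bdd_above {m b | b. pea_le pl b a}" unfolding bdd_above_def using K by blast
  moreover have "m b \<in> {m b | b. pea_le pl b a}" using assms(2) by blast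
  ultimately show ?thesis unfolding P_def by (simp add: cSup_upper)
qed

lemma P_least: assumes "\<And>b. pea_le pl b a \<Longrightarrow> m b \<le> y" shows "P m a \<le> y"
  unfolding P_def
proof (rule cSup_least)
  show "{m b |b. pea_le pl b a} \<noteq> {}" using le_refl by blast
next
  fix x assume "x \<in> {m b |b. pea_le pl b a}" then show "x \<le> y" using assms by blast
qed

lemma P_ge: "m \<in> jordan pl \<Longrightarrow> m a \<le> P m a"
  using P_upper le_refl by blast

lemma P_nonneg: "m \<in> jordan pl \<Longrightarrow> 0 \<le> P m a"
  using P_upper[OF _ zero_le] sm_zero[OF jordan_sm] by fastforce

lemma P_add: assumes mj: "m \<in> jordan pl" and s: "pl a1 a2 = Some s"
  shows "P m s = P m a1 + P m a2"
proof -
  have sm: "signed_measure pl m" using jordan_sm[OF mj] .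
  have le: "P m s \<le> P m a1 + P m a2"
  proof (rule P_least)
    fix b assume "pea_le pl b s"
    then obtain c where bc: "pl b c = Some s" unfolding pea_le_def by blast
    obtain b1 b2 where h: "pl b1 b2 = Some b" "pea_le pl b1 a1" "pea_le pl b2 a2"
      using rdp[OF bc s] by blast
    have "m b = m b1 + m b2" using sm h(1) unfolding signed_measure_def by blast
    moreover have "m b1 \<le> P m a1" "m b2 \<le> P m a2" using P_upper[OF mj] h(2,3) by auto
    ultimately show "m b \<le> P m a1 + P m a2" by linarith
  qed
  have key: "m b1 + m b2 \<le> P m s" if h1: "pea_le pl b1 a1" and h2: "pea_le pl b2 a2" for b1 b2
  proof -
    obtain c1 where c1: "pl b1 c1 = Some a1" using h1 unfolding pea_le_def by blast
    obtain c2 where c2: "pl b2 c2 = Some a2" using h2 unfolding pea_le_def by blast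
    obtain y1 where y1: "pl c1 a2 = Some y1" "pl b1 y1 = Some s" using assoc1[OF c1 s] by blast
    obtain w where w: "pl c1 b2 = Some w" "pl w c2 = Some y1" using assoc2[OF c2 y1(1)] by blast
    obtain e where e: "pl b2 e = Some w" using shift[OF w(1)] by blast
    obtain f where f: "pl e c2 = Some f" "pl b2 f = Some y1" using assoc1[OF e w(2)] by blast
    obtain g where g: "pl b1 b2 = Some g" "pl g f = Some s" using assoc2[OF f(2) y1(2)] by blast
    have "m g = m b1 + m b2" using sm g(1) unfolding signed_measure_def by blast
    moreover have "m g \<le> P m s" using P_upper[OF mj] g(2) unfolding pea_le_def by blast
    ultimately show ?thesis by linarith
  qed
  have "P m a1 \<le> P m s - P m a2"
  proof (rule P_least)
    fix b1 assume h1: "pea_le pl b1 a1"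
    have "P m a2 \<le> P m s - m b1"
      by (rule P_least) (use key[OF h1] in force)
    then show "m b1 \<le> P m s - P m a2" by linarith
  qed
  with le show ?thesis by linarith
qed

lemma P_sm: "m \<in> jordan pl \<Longrightarrow> signed_measure pl (P m)"
  unfolding signed_measure_def using P_add by blast

lemma P_meas: "m \<in> jordan pl \<Longrightarrow> is_measure pl (P m)"
  unfolding is_measure_def using P_sm P_nonneg by blast

lemma P_mono: "m \<in> jordan pl \<Longrightarrow> pea_le pl a b \<Longrightarrow> P m a \<le> P m b"
  using meas_mono[OF P_meas] by blast


lemma jsup_eq: assumes mj: "m \<in> jordan pl" shows "jsup pl m (\<lambda>_. 0) = P m"
proof -
  have sm: "signed_measure pl m" using jordan_sm[OF mj] .
  have PJ: "P m \<in> jordan pl" unfolding jordan_def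
  proof (intro CollectI exI conjI)
    show "is_measure pl (P m)" using P_meas[OF mj] .
    show "is_measure pl (\<lambda>_. 0::real)" unfolding is_measure_def signed_measure_def by simp
  qed simp
  have j1: "jle pl m (P m)" unfolding jle_def is_measure_def
    using P_sm[OF mj] sm P_ge[OF mj] unfolding signed_measure_def by auto
  have j2: "jle pl (\<lambda>_. 0) (P m)" unfolding jle_def is_measure_def
    using P_sm[OF mj] P_nonneg[OF mj] unfolding signed_measure_def by auto
  have j3: "jle pl (P m) q" if q: "q \<in> jordan pl" "jle pl m q" "jle pl (\<lambda>_. 0) q" for q
  proof -
    have sq: "signed_measure pl q" using jordan_sm[OF q(1)] .
    have "P m a \<le> q a" for a
    proof (rule P_least)
      fix b assume "pea_le pl b a"
      then obtain c where bc: "pl b c = Some a" unfolding pea_le_def by blast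
      have "q a = q b + q c" using sq bc unfolding signed_measure_def by blast
      moreover have "0 \<le> q b - m b" using q(2) unfolding jle_def is_measure_def by blast
      moreover have "0 \<le> q c - 0" using q(3) unfolding jle_def is_measure_def by blast
      ultimately show "m b \<le> q a" by linarith
    qed
    then show ?thesis unfolding jle_def is_measure_def
      using sq P_sm[OF mj] unfolding signed_measure_def by auto
  qed
  show ?thesis unfolding jsup_def
  proof (rule the_equality)
    show "P m \<in> jordan pl \<and> jle pl m (P m) \<and> jle pl (\<lambda>_. 0) (P m) \<and>
      (\<forall>q\<in>jordan pl. jle pl m q \<and> jle pl (\<lambda>_. 0) q \<longrightarrow> jle pl (P m) q)"
      using PJ j1 j2 j3 by blast
  next
    fix p assume h: "p \<in> jordan pl \<and> jle pl m p \<and> jle pl (\<lambda>_. 0) p \<and>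
      (\<forall>q\<in>jordan pl. jle pl m q \<and> jle pl (\<lambda>_. 0) q \<longrightarrow> jle pl p q)"
    then have "jle pl p (P m)" using PJ j1 j2 by blast
    moreover have "jle pl (P m) p" using j3 h by blast
    ultimately show "p = P m" unfolding jle_def is_measure_def
      by (intro ext) (smt (verit))
  qed
qed

lemma jinf_eq: assumes mj: "m \<in> jordan pl"
  shows "jinf pl m (\<lambda>_. 0) = (\<lambda>a. - P (\<lambda>b. - m b) a)"
proof -
  define m' where "m' = (\<lambda>b. - m b)"
  have m'j: "m' \<in> jordan pl" unfolding m'_def using jordan_neg[OF mj] .
  define p where "p = (\<lambda>a. - P m' a)"
  have sm: "signed_measure pl m" using jordan_sm[OF mj] .
  have smp: "signed_measure pl p" using P_sm[OF m'j] unfolding p_def signed_measure_def by auto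
  have z0: "is_measure pl (\<lambda>_. 0::real)" unfolding is_measure_def signed_measure_def by simp
  have PJ: "p \<in> jordan pl" unfolding jordan_def p_def
    by (rule CollectI, rule exI[of _ "\<lambda>_. 0"], rule exI[of _ "P m'"]) (simp add: z0 P_meas[OF m'j])
  have ge: "0 \<le> m a + P m' a" for a using P_ge[OF m'j, of a] unfolding m'_def by simp
  have j1: "jle pl p m" unfolding jle_def is_measure_def
    using smp sm ge unfolding signed_measure_def p_def by auto
  have j2: "jle pl p (\<lambda>_. 0)" unfolding jle_def is_measure_def
    using smp P_nonneg[OF m'j] unfolding signed_measure_def p_def by auto
  have j3: "jle pl q p" if q: "q \<in> jordan pl" "jle pl q m" "jle pl q (\<lambda>_. 0)" for q
  proof -
    have sq: "signed_measure pl q" using jordan_sm[OF q(1)] .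
    have "P m' a \<le> - q a" for a
    proof (rule P_least)
      fix b assume "pea_le pl b a"
      then obtain c where bc: "pl b c = Some a" unfolding pea_le_def by blast
      have "q a = q b + q c" using sq bc unfolding signed_measure_def by blast
      moreover have "0 \<le> m b - q b" using q(2) unfolding jle_def is_measure_def by blast
      moreover have "0 \<le> 0 - q c" using q(3) unfolding jle_def is_measure_def by blast
      ultimately show "m' b \<le> - q a" unfolding m'_def by linarith
    qed
    then have "0 \<le> p a - q a" for a unfolding p_def by (smt (verit))
    then show ?thesis unfolding jle_def is_measure_def
      using sq smp unfolding signed_measure_def by auto
  qed
  have "jinf pl m (\<lambda>_. 0) = p" unfolding jinf_def
  proof (rule the_equality)
    show "p \<in> jordan pl \<and> jle pl p m \<and> jle pl p (\<lambda>_. 0) \<and>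
      (\<forall>q\<in>jordan pl. jle pl q m \<and> jle pl q (\<lambda>_. 0) \<longrightarrow> jle pl q p)"
      using PJ j1 j2 j3 by blast
  next
    fix p' assume h: "p' \<in> jordan pl \<and> jle pl p' m \<and> jle pl p' (\<lambda>_. 0) \<and>
      (\<forall>q\<in>jordan pl. jle pl q m \<and> jle pl q (\<lambda>_. 0) \<longrightarrow> jle pl q p')"
    then have "jle pl p p'" using PJ j1 j2 by blast
    moreover have "jle pl p' p" using j3 h by blast
    ultimately show "p' = p" unfolding jle_def is_measure_def
      by (intro ext) (smt (verit))
  qed
  then show ?thesis unfolding p_def m'_def .
qed

lemma P_sigma: assumes mj: "m \<in> jordan pl" and sa: "sigma_additive pl m"
  shows "sigma_additive pl (P m)"
  unfolding sigma_additive_def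
proof (intro allI impI)
  fix a x assume H: "(\<forall>n. pea_le pl (a n) (a (Suc n))) \<and> is_sup (pea_le pl) (range a) x"
  then have inc: "\<And>n. pea_le pl (a n) (a (Suc n))" and sup: "is_sup (pea_le pl) (range a) x"
    by auto
  have sm: "signed_measure pl m" using jordan_sm[OF mj] .
  from inc obtain f where f: "\<And>n. pl (a n) (f n) = Some (a (Suc n))"
    unfolding pea_le_def by metis
  define d where "d n = (case n of 0 \<Rightarrow> a 0 | Suc k \<Rightarrow> f k)" for n
  have pd: "psum pl d n = Some (a n)" for n by (induction n) (auto simp: d_def f)
  have rr: "range (\<lambda>n. the (psum pl d n)) = range a" using pd by simp
  have ds: "sigma_sum pl d x" using sup pd unfolding sigma_sum_def rr by simp
  have ax: "pea_le pl (a n) x" for n using sup unfolding is_sup_def by auto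
  have Pm: "P m (a n) \<le> P m x" for n using P_mono[OF mj ax] .
  show "(\<lambda>n. P m (a n)) \<longlonglongrightarrow> P m x"
  proof (rule LIMSEQ_I)
    fix r :: real assume r: "0 < r"
    obtain b where bx: "pea_le pl b x" and mb: "P m x - r < m b"
    proof -
      have "\<exists>b. pea_le pl b x \<and> P m x - r < m b"
      proof (rule ccontr)
        assume "\<not> ?thesis"
        then have "P m x \<le> P m x - r" by (intro P_least) auto
        with r show False by linarith
      qed
      then show ?thesis using that by blast
    qed
    from bx obtain c where bc: "pl b c = Some x" unfolding pea_le_def by blast
    from srdp bc ds obtain c1 c2 where s1: "sigma_sum pl c1 b"
      and cd: "\<forall>n. pl (c1 n) (c2 n) = Some (d n)" unfolding sigma_RDP_def by blast
    define bs where "bs = (\<lambda>n. the (psum pl c1 n))"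
    have pbs: "psum pl c1 n = Some (bs n)" for n using s1 unfolding sigma_sum_def bs_def by auto
    have incb: "pea_le pl (bs n) (bs (Suc n))" for n
      using pbs[of n] pbs[of "Suc n"] by (auto simp: pea_le_def)
    have supb: "is_sup (pea_le pl) (range bs) b" using s1 unfolding sigma_sum_def bs_def by simp
    have "(\<lambda>n. m (bs n)) \<longlonglongrightarrow> m b" using sa incb supb unfolding sigma_additive_def by blast
    from order_tendstoD(1)[OF this mb] obtain N where N: "\<And>n. n \<ge> N \<Longrightarrow> P m x - r < m (bs n)"
      unfolding eventually_sequentially by blast
    show "\<exists>no. \<forall>n\<ge>no. norm (P m (a n) - P m x) < r"
    proof (intro exI allI impI)
      fix n assume nN: "n \<ge> N"
      have "m (bs n) = (\<Sum>k\<le>n. m (c1 k))" using psum_sum[OF sm pbs] .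
      also have "\<dots> \<le> (\<Sum>k\<le>n. P m (d k))"
      proof (rule sum_mono)
        fix k
        have "pea_le pl (c1 k) (d k)" using cd unfolding pea_le_def by blast
        then show "m (c1 k) \<le> P m (d k)" using P_ge[OF mj] P_mono[OF mj] by (meson order_trans)
      qed
      also have "\<dots> = P m (a n)" using psum_sum[OF P_sm[OF mj] pd] by simp
      finally have "m (bs n) \<le> P m (a n)" .
      with N[OF nN] Pm[of n] show "norm (P m (a n) - P m x) < r" by auto
    qed
  qed
qed

end


theorem proposition4p6:
  fixes pl :: "'a \<Rightarrow> 'a \<Rightarrow> 'a option" and z u :: 'a and m :: "'a \<Rightarrow> real"
  assumes "pea pl z u"
    and "sigma_RDP pl"
    and "m \<in> jordan pl"
    and "sigma_additive pl m"
  shows "sigma_additive pl (jpos pl m) \<and> sigma_additive pl (jneg pl m) \<and>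
         sigma_additive pl (jabs pl m)"
proof -
  interpret peaR pl z u using assms(1,2) by unfold_locales
  have m'j: "(\<lambda>b. - m b) \<in> jordan pl" using jordan_neg[OF assms(3)] .
  have sa': "sigma_additive pl (\<lambda>b. - m b)" using assms(4) unfolding sigma_additive_def
    by (auto intro: tendsto_minus)
  have jp: "jpos pl m = P m" unfolding jpos_def using jsup_eq[OF assms(3)] .
  have jn: "jneg pl m = P (\<lambda>b. - m b)" unfolding jneg_def jinf_eq[OF assms(3)] by simp
  have s1: "sigma_additive pl (jpos pl m)" unfolding jp using P_sigma[OF assms(3,4)] .
  have s2: "sigma_additive pl (jneg pl m)" unfolding jn using P_sigma[OF m'j sa'] .
  have s3: "sigma_additive pl (jabs pl m)" using s1 s2 unfolding jabs_def sigma_additive_def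
    by (auto intro: tendsto_add)
  show ?thesis using s1 s2 s3 by blast
qed

end
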